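(* The function $g:2^V\to\mathbb{R}$, $g(A)=h(A)+\frac1L f(A)$, is non-decreasing and submodular.
   Context: $G=(V,E,w)$ is a finite simple undirected graph with positive rational edge weights and no isolated vertices. $N_A(v)=N(v)\cap A$, $W_A(v)=\sum_{u\in N_A(v)}w_{(v,u)}$, $W(v)=W_V(v)$. $h(A)=\sum_{v\in V}h_A(v)$ with $h_A(v)=W(v)/2$ if $v\in A$ or $W_A(v)\ge W(v)/2$, and $h_A(v)=W_A(v)$ otherwise. $f(A)=\sum_{v\in V}\delta_A(v)$ with $\delta_A(v)=1$ if $|N_A(v)|>0$ and $0$ otherwise. For $v$ with incident edge weights $w_1,\dots,w_d$, write $w_0=W(v)/2$ and each $w_i$ as a reduced fraction $p_i/q_i$; $l(v)=\mathrm{lcm}\{q_0,\dots,q_d\}$, $L=\max_v l(v)$. *)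

theory Defs
  imports Complex_Main
begin

definition wgraph :: "'a set \<Rightarrow> ('a \<Rightarrow> 'a \<Rightarrow> bool) \<Rightarrow> ('a \<Rightarrow> 'a \<Rightarrow> rat) \<Rightarrow> bool" where
  "wgraph V E w \<longleftrightarrow> finite V
     \<and> (\<forall>u v. E u v \<longrightarrow> u \<in> V \<and> v \<in> V)
     \<and> (\<forall>v. \<not> E v v)
     \<and> (\<forall>u v. E u v \<longrightarrow> E v u)
     \<and> (\<forall>u v. E u v \<longrightarrow> w u v = w v u)
     \<and> (\<forall>u v. E u v \<longrightarrow> w u v > 0)"

definition no_isolated :: "'a set \<Rightarrow> ('a \<Rightarrow> 'a \<Rightarrow> bool) \<Rightarrow> bool" where
  "no_isolated V E \<longleftrightarrow> (\<forall>v\<in>V. \<exists>u. E v u)"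

definition nbA :: "('a \<Rightarrow> 'a \<Rightarrow> bool) \<Rightarrow> 'a set \<Rightarrow> 'a \<Rightarrow> 'a set" where
  "nbA E A v = {u \<in> A. E v u}"

definition WA :: "('a \<Rightarrow> 'a \<Rightarrow> bool) \<Rightarrow> ('a \<Rightarrow> 'a \<Rightarrow> rat) \<Rightarrow> 'a set \<Rightarrow> 'a \<Rightarrow> rat" where
  "WA E w A v = (\<Sum>u\<in>nbA E A v. w v u)"

definition hA :: "'a set \<Rightarrow> ('a \<Rightarrow> 'a \<Rightarrow> bool) \<Rightarrow> ('a \<Rightarrow> 'a \<Rightarrow> rat) \<Rightarrow> 'a set \<Rightarrow> 'a \<Rightarrow> rat" where
  "hA V E w A v = (if v \<in> A \<or> WA E w A v \<ge> WA E w V v / 2 then WA E w V v / 2 else WA E w A v)"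

definition hfun :: "'a set \<Rightarrow> ('a \<Rightarrow> 'a \<Rightarrow> bool) \<Rightarrow> ('a \<Rightarrow> 'a \<Rightarrow> rat) \<Rightarrow> 'a set \<Rightarrow> rat" where
  "hfun V E w A = (\<Sum>v\<in>V. hA V E w A v)"

definition ffun :: "'a set \<Rightarrow> ('a \<Rightarrow> 'a \<Rightarrow> bool) \<Rightarrow> 'a set \<Rightarrow> nat" where
  "ffun V E A = (\<Sum>v\<in>V. if card (nbA E A v) > 0 then 1 else 0)"

definition denom :: "rat \<Rightarrow> int" where
  "denom r = snd (quotient_of r)"

definition lv :: "'a set \<Rightarrow> ('a \<Rightarrow> 'a \<Rightarrow> bool) \<Rightarrow> ('a \<Rightarrow> 'a \<Rightarrow> rat) \<Rightarrow> 'a \<Rightarrow> int" where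
  "lv V E w v = Lcm (denom ` ({WA E w V v / 2} \<union> {w v u | u. E v u}))"

definition Lmax :: "'a set \<Rightarrow> ('a \<Rightarrow> 'a \<Rightarrow> bool) \<Rightarrow> ('a \<Rightarrow> 'a \<Rightarrow> rat) \<Rightarrow> int" where
  "Lmax V E w = Max (lv V E w ` V)"

definition gfun :: "'a set \<Rightarrow> ('a \<Rightarrow> 'a \<Rightarrow> bool) \<Rightarrow> ('a \<Rightarrow> 'a \<Rightarrow> rat) \<Rightarrow> 'a set \<Rightarrow> real" where
  "gfun V E w A = real_of_rat (hfun V E w A) + real (ffun V E A) / real_of_int (Lmax V E w)"

end

theory Submission
  imports Defs
begin

lemma nb_sub: "wgraph V E w \<Longrightarrow> nbA E A v \<subseteq> V"
  by (auto simp: wgraph_def nbA_def)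

lemma nb_fin: "wgraph V E w \<Longrightarrow> finite (nbA E A v)"
  using nb_sub by (metis finite_subset wgraph_def)

lemma WA_nonneg: "wgraph V E w \<Longrightarrow> WA E w A v \<ge> 0"
  unfolding WA_def by (rule sum_nonneg) (auto simp: nbA_def wgraph_def less_imp_le)

lemma WA_mono: assumes "wgraph V E w" "A \<subseteq> B" shows "WA E w A v \<le> WA E w B v"
  unfolding WA_def
proof (rule sum_mono2)
  show "finite (nbA E B v)" using nb_fin[OF assms(1)] .
  show "nbA E A v \<subseteq> nbA E B v" using assms(2) by (auto simp: nbA_def)
  show "\<And>b. b \<in> nbA E B v - nbA E A v \<Longrightarrow> 0 \<le> w v b"
    using assms(1) by (auto simp: nbA_def wgraph_def less_imp_le)
qed

lemma WA_mod: assumes "wgraph V E w"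
  shows "WA E w (A \<union> B) v + WA E w (A \<inter> B) v = WA E w A v + WA E w B v"
proof -
  have 1: "nbA E (A \<union> B) v = nbA E A v \<union> nbA E B v" by (auto simp: nbA_def)
  have 2: "nbA E (A \<inter> B) v = nbA E A v \<inter> nbA E B v" by (auto simp: nbA_def)
  show ?thesis unfolding WA_def 1 2
    by (rule sum.union_inter) (auto intro: nb_fin[OF assms])
qed

lemma hA_min: assumes "wgraph V E w"
  shows "hA V E w A v = min (WA E w A v + (if v \<in> A then WA E w V v / 2 else 0)) (WA E w V v / 2)"
  using WA_nonneg[OF assms, of A v] WA_nonneg[OF assms, of V v]
  by (auto simp: hA_def min_def)

lemma min_sub: fixes p q a b c :: rat
  assumes "p+q=a+b" "q \<le> a" "q\<le>b" "a\<le>p" "b\<le>p"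
  shows "min p c + min q c \<le> min a c + min b c"
  using assms unfolding min_def by (split if_split)+ linarith

definition mm :: "'a set \<Rightarrow> ('a \<Rightarrow> 'a \<Rightarrow> bool) \<Rightarrow> ('a \<Rightarrow> 'a \<Rightarrow> rat) \<Rightarrow> 'a set \<Rightarrow> 'a \<Rightarrow> rat" where
  "mm V E w A v = WA E w A v + (if v \<in> A then WA E w V v / 2 else 0)"

lemma mm_mono: assumes "wgraph V E w" "A \<subseteq> B" shows "mm V E w A v \<le> mm V E w B v"
proof -
  have "WA E w A v \<le> WA E w B v" by (rule WA_mono[OF assms])
  moreover have "(if v \<in> A then WA E w V v / 2 else 0) \<le> (if v \<in> B then WA E w V v / 2 else 0)"
    using WA_nonneg[OF assms(1), of V v] assms(2) by auto
  ultimately show ?thesis unfolding mm_def by linarith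
qed

lemma mm_mod: assumes "wgraph V E w"
  shows "mm V E w (A \<union> B) v + mm V E w (A \<inter> B) v = mm V E w A v + mm V E w B v"
proof -
  have "(if v \<in> A \<union> B then WA E w V v / 2 else 0) + (if v \<in> A \<inter> B then WA E w V v / 2 else 0)
      = (if v \<in> A then WA E w V v / 2 else 0) + (if v \<in> B then WA E w V v / 2 else 0)" by auto
  then show ?thesis unfolding mm_def using WA_mod[OF assms, of A B v] by linarith
qed

lemma hA_mm: assumes "wgraph V E w" shows "hA V E w A v = min (mm V E w A v) (WA E w V v / 2)"
  unfolding mm_def by (rule hA_min[OF assms])

lemma hA_mono: assumes "wgraph V E w" "A \<subseteq> B" shows "hA V E w A v \<le> hA V E w B v"
  unfolding hA_mm[OF assms(1)] using mm_mono[OF assms, of v] by (rule min.mono) simp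

lemma hA_sub: assumes "wgraph V E w"
  shows "hA V E w (A \<union> B) v + hA V E w (A \<inter> B) v \<le> hA V E w A v + hA V E w B v"
  unfolding hA_mm[OF assms]
  by (rule min_sub[OF mm_mod[OF assms]]; rule mm_mono[OF assms]; auto)

lemma delta_eq: assumes "wgraph V E w"
  shows "(if card (nbA E A v) > 0 then 1 else 0) = (if nbA E A v \<noteq> {} then (1::nat) else 0)"
  using nb_fin[OF assms] by (simp add: card_gt_0_iff)

lemma f_mono: assumes "wgraph V E w" "A \<subseteq> B" shows "ffun V E A \<le> ffun V E B"
  unfolding ffun_def
proof (rule sum_mono)
  fix v
  have "nbA E A v \<subseteq> nbA E B v" using assms(2) by (auto simp: nbA_def)
  then show "(if card (nbA E A v) > 0 then 1 else 0) \<le> (if card (nbA E B v) > 0 then (1::nat) else 0)"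
    unfolding delta_eq[OF assms(1)] by auto
qed

lemma f_sub: assumes "wgraph V E w"
  shows "ffun V E (A \<union> B) + ffun V E (A \<inter> B) \<le> ffun V E A + ffun V E B"
  unfolding ffun_def sum.distrib[symmetric]
proof (rule sum_mono)
  fix v
  have 1: "nbA E (A \<union> B) v = nbA E A v \<union> nbA E B v" by (auto simp: nbA_def)
  have 2: "nbA E (A \<inter> B) v = nbA E A v \<inter> nbA E B v" by (auto simp: nbA_def)
  show "(if card (nbA E (A \<union> B) v) > 0 then 1 else 0) + (if card (nbA E (A \<inter> B) v) > 0 then 1 else 0)
     \<le> (if card (nbA E A v) > 0 then 1 else 0) + (if card (nbA E B v) > 0 then (1::nat) else 0)"
    unfolding delta_eq[OF assms] 1 2 by auto
qed

lemma L_nonneg_or: assumes "wgraph V E w" shows "V = {} \<or> real_of_int (Lmax V E w) \<ge> 0"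
proof (cases "V = {}")
  case False
  then obtain v where v: "v \<in> V" by auto
  have fin: "finite (lv V E w ` V)" using assms by (simp add: wgraph_def)
  have "lv V E w v \<le> Lmax V E w" unfolding Lmax_def using fin v by (intro Max_ge) auto
  moreover have "lv V E w v \<ge> 0" unfolding lv_def by (rule Lcm_int_greater_eq_0)
  ultimately show ?thesis by simp
qed simp

lemma f_div_mono: assumes "wgraph V E w" "real (a::nat) \<le> real b" "V \<noteq> {}"
  shows "real a / real_of_int (Lmax V E w) \<le> real b / real_of_int (Lmax V E w)"
  using L_nonneg_or[OF assms(1)] assms(3) divide_right_mono[OF assms(2)] by blast

theorem mainTheorem15:
  fixes V :: "'a set" and E :: "'a \<Rightarrow> 'a \<Rightarrow> bool" and w :: "'a \<Rightarrow> 'a \<Rightarrow> rat"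
  assumes "wgraph V E w" and "no_isolated V E"
  shows "(\<forall>A B. A \<subseteq> B \<and> B \<subseteq> V \<longrightarrow> gfun V E w A \<le> gfun V E w B)
       \<and> (\<forall>A B. A \<subseteq> V \<and> B \<subseteq> V \<longrightarrow>
            gfun V E w (A \<union> B) + gfun V E w (A \<inter> B) \<le> gfun V E w A + gfun V E w B)"
proof (intro conjI allI impI)
  fix A B assume AB: "A \<subseteq> B \<and> B \<subseteq> V"
  have h: "hfun V E w A \<le> hfun V E w B" unfolding hfun_def
    by (rule sum_mono, rule hA_mono[OF assms(1)]) (use AB in auto)
  have f: "real (ffun V E A) \<le> real (ffun V E B)" using f_mono[OF assms(1)] AB by simp
  show "gfun V E w A \<le> gfun V E w B"
  proof (cases "V = {}")
    case True then show ?thesis by (simp add: gfun_def hfun_def ffun_def)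
  next
    case False
    then have "real (ffun V E A) / real_of_int (Lmax V E w) \<le> real (ffun V E B) / real_of_int (Lmax V E w)"
      using f_div_mono[OF assms(1) f] by auto
    moreover have "real_of_rat (hfun V E w A) \<le> real_of_rat (hfun V E w B)" using h of_rat_less_eq by blast
    ultimately show ?thesis unfolding gfun_def by linarith
  qed
next
  fix A B assume AB: "A \<subseteq> V \<and> B \<subseteq> V"
  have h: "hfun V E w (A \<union> B) + hfun V E w (A \<inter> B) \<le> hfun V E w A + hfun V E w B"
    unfolding hfun_def sum.distrib[symmetric]
    by (rule sum_mono, rule hA_sub[OF assms(1)])
  have f: "real (ffun V E (A \<union> B) + ffun V E (A \<inter> B)) \<le> real (ffun V E A + ffun V E B)"
    using f_sub[OF assms(1), of A B] of_nat_mono by blast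
  show "gfun V E w (A \<union> B) + gfun V E w (A \<inter> B) \<le> gfun V E w A + gfun V E w B"
  proof (cases "V = {}")
    case True then show ?thesis by (simp add: gfun_def hfun_def ffun_def)
  next
    case False
    then have "real (ffun V E (A \<union> B) + ffun V E (A \<inter> B)) / real_of_int (Lmax V E w)
       \<le> real (ffun V E A + ffun V E B) / real_of_int (Lmax V E w)"
      using f_div_mono[OF assms(1) f] by auto
    then have 1: "real (ffun V E (A \<union> B)) / real_of_int (Lmax V E w) + real (ffun V E (A \<inter> B)) / real_of_int (Lmax V E w)
       \<le> real (ffun V E A) / real_of_int (Lmax V E w) + real (ffun V E B) / real_of_int (Lmax V E w)"
      by (simp add: add_divide_distrib)
    have 2: "real_of_rat (hfun V E w (A \<union> B)) + real_of_rat (hfun V E w (A \<inter> B))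
       \<le> real_of_rat (hfun V E w A) + real_of_rat (hfun V E w B)"
      using h by (metis of_rat_add of_rat_less_eq)
    show ?thesis unfolding gfun_def using 1 2 by linarith
  qed
qed

end
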